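(* Let $d$ be a positive integer and let $A$ be a $d \times n_1$ real matrix whose columns form a spherical 2-design of size $n_1$ on $S^{d-1}$. Let $J$ be the $1 \times n_1$ matrix of all 1's, $\alpha = \sqrt{d/(d+1)}$ and $\delta = \sqrt{1/(d+1)}$. Then the $2n_1$ columns of the $(d+1)\times 2n_1$ matrix $M = \begin{pmatrix} \alpha A & -\alpha A \\ \delta J & -\delta J \end{pmatrix}$ form a spherical 3-design of size $2n_1$ on $S^d$.
   Context: $S^k$ denotes the unit sphere in $\mathbb{R}^{k+1}$. A spherical $t$-design on $S^k$ of size $n$ is a finite collection $X$ of $n$ points of $S^k$ (here given as the columns of a matrix) such that the average of every polynomial of degree at most $t$ in $k+1$ variables over $S^k$ (with respect to surface measure) equals $\frac{1}{|X|}\sum_{x\in X} f(x)$. *)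

theory Defs
  imports "HOL-Analysis.Analysis"
begin

definition poly_fun_deg :: "nat \<Rightarrow> (real^'k \<Rightarrow> real) \<Rightarrow> bool" where
  "poly_fun_deg t f \<longleftrightarrow>
     (\<exists>(F :: ('k \<Rightarrow> nat) set) (c :: ('k \<Rightarrow> nat) \<Rightarrow> real).
        finite F \<and> (\<forall>a\<in>F. (\<Sum>i\<in>UNIV. a i) \<le> t) \<and>
        f = (\<lambda>x. \<Sum>a\<in>F. c a * (\<Prod>i\<in>UNIV. (x $ i) ^ a i)))"

text \<open>Average of f over the unit sphere w.r.t. (normalized) surface measure,
  realised as the cone measure: surface measure of E is proportional to the
  Lebesgue measure of the cone {r x | 0 < r <= 1, x in E}; equivalently the
  normalized surface measure is the image of the uniform distribution on the
  unit ball under x \<mapsto> x / |x|.\<close>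
definition sphere_avg :: "(real^'k \<Rightarrow> real) \<Rightarrow> real" where
  "sphere_avg f = integral (ball 0 1) (\<lambda>x. f (x /\<^sub>R norm x)) / measure lebesgue (ball (0::real^'k) 1)"

definition sph_design :: "nat \<Rightarrow> nat \<Rightarrow> (nat \<Rightarrow> real^'k) \<Rightarrow> bool" where
  "sph_design t n X \<longleftrightarrow>
     (\<forall>j<n. norm (X j) = 1) \<and>
     (\<forall>f. poly_fun_deg t f \<longrightarrow> sphere_avg f = (\<Sum>j<n. f (X j)) / real n)"

end

theory Submission
  imports Defs
begin

lemma emeasure_lborel_box_cart:
  fixes l u :: "real^'n"
  assumes "\<And>i. l$i \<le> u$i"
  shows "emeasure lborel (box l u) = ennreal (\<Prod>i\<in>UNIV. u$i - l$i)"
proof -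
  have "\<And>b. b \<in> Basis \<Longrightarrow> l \<bullet> b \<le> u \<bullet> b"
    using assms by (auto simp: Basis_vec_def cart_eq_inner_axis[symmetric])
  then have "emeasure lborel (box l u) = (\<Prod>b\<in>Basis. (u - l) \<bullet> b)" by simp
  also have "(\<Prod>b\<in>Basis. (u - l) \<bullet> b) = (\<Prod>i\<in>UNIV. u$i - l$i)"
    by (simp add: Basis_vec_def cart_eq_inner_axis axis_eq_axis prod.UNION_disjoint inner_diff_left)
  finally show ?thesis .
qed

lemma signed_perm_measurable:
  fixes p :: "'n::finite \<Rightarrow> 'n" and s :: "'n \<Rightarrow> real"
  shows "(\<lambda>x::real^'n. \<chi> i. s i * x $ p i) \<in> borel_measurable borel"
proof -
  have "continuous_on UNIV (\<lambda>x::real^'n. \<chi> i. s i * x $ p i)"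
    by (intro continuous_on_vec_lambda continuous_intros)
  then show ?thesis by (rule borel_measurable_continuous_onI)
qed

lemma signed_perm_distr:
  fixes p :: "'n::finite \<Rightarrow> 'n" and s :: "'n \<Rightarrow> real"
  assumes p: "bij p" and s: "\<And>i. s i = 1 \<or> s i = -1"
  shows "distr lborel borel (\<lambda>x::real^'n. \<chi> i. s i * x $ p i) = lborel"
proof (rule lborel_eqI[symmetric])
  let ?T = "\<lambda>x::real^'n. \<chi> i. s i * x $ p i"
  let ?q = "inv p"
  fix l u :: "real^'n"
  assume le: "\<And>b. b \<in> Basis \<Longrightarrow> l \<bullet> b \<le> u \<bullet> b"
  have leI: "l$i \<le> u$i" for i
    using le[of "axis i 1"] by (auto simp: Basis_vec_def cart_eq_inner_axis[symmetric])
  define L :: "real^'n" where "L = (\<chi> k. if s (?q k) = 1 then l $ ?q k else - u $ ?q k)"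
  define U :: "real^'n" where "U = (\<chi> k. if s (?q k) = 1 then u $ ?q k else - l $ ?q k)"
  have pq: "p (?q k) = k" for k using p by (simp add: bij_is_surj surj_f_inv_f)
  have qp: "?q (p k) = k" for k using p by (simp add: bij_is_inj)
  have pre: "?T -` box l u = box L U"
  proof (rule set_eqI)
    fix x :: "real^'n"
    have "x \<in> ?T -` box l u \<longleftrightarrow> (\<forall>i. l$i < s i * x$p i \<and> s i * x$p i < u$i)"
      by (simp add: mem_box_cart)
    also have "\<dots> \<longleftrightarrow> (\<forall>k. l$ ?q k < s (?q k) * x$k \<and> s (?q k) * x$k < u$ ?q k)"
      by (metis pq qp)
    also have "\<dots> \<longleftrightarrow> (\<forall>k. L$k < x$k \<and> x$k < U$k)"
      unfolding L_def U_def using s by (auto; metis add.inverse_inverse minus_less_iff mult_1 mult_minus_left)+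
    finally show "x \<in> ?T -` box l u \<longleftrightarrow> x \<in> box L U" by (simp add: mem_box_cart)
  qed
  have LU: "L$k \<le> U$k" for k unfolding L_def U_def using leI by auto
  have "emeasure (distr lborel borel ?T) (box l u) = emeasure lborel (box L U)"
    by (simp add: emeasure_distr signed_perm_measurable pre)
  also have "\<dots> = ennreal (\<Prod>k\<in>UNIV. U$k - L$k)" by (rule emeasure_lborel_box_cart[OF LU])
  also have "(\<Prod>k\<in>UNIV. U$k - L$k) = (\<Prod>k\<in>UNIV. u$ ?q k - l$ ?q k)"
    unfolding L_def U_def by (intro prod.cong) auto
  also have "\<dots> = (\<Prod>i\<in>UNIV. u$i - l$i)"
    using prod.reindex_bij_betw[of ?q UNIV UNIV "\<lambda>i. u$i - l$i"] p
    by (simp add: bij_betw_inv_into)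
  also have "\<dots> = (\<Prod>b\<in>Basis. (u - l) \<bullet> b)"
    by (simp add: Basis_vec_def cart_eq_inner_axis axis_eq_axis prod.UNION_disjoint inner_diff_left)
  finally show "emeasure (distr lborel borel ?T) (box l u) = (\<Prod>b\<in>Basis. (u - l) \<bullet> b)"
    by simp
qed simp

lemma ind_ball_meas:
  fixes G :: "real^'n \<Rightarrow> real"
  assumes "G \<in> borel_measurable borel"
  shows "(\<lambda>x. indicator (ball 0 1) x * G x) \<in> borel_measurable borel"
  by (intro borel_measurable_times borel_measurable_indicator assms) auto

lemma ball_integral_lborel:
  fixes G :: "real^'n \<Rightarrow> real"
  assumes G: "G \<in> borel_measurable borel" and B: "\<And>x. x \<in> ball 0 1 \<Longrightarrow> \<bar>G x\<bar> \<le> B"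
  shows "G integrable_on ball 0 1"
    and "integral (ball 0 1) G = integral\<^sup>L lborel (\<lambda>x. indicator (ball 0 1) x * G x)"
proof -
  let ?F = "\<lambda>x. indicator (ball (0::real^'n) 1) x * G x"
  have int: "integrable lborel ?F"
  proof (rule integrableI_bounded_set[where A="ball 0 1" and B=B])
    show "?F \<in> borel_measurable lborel" using ind_ball_meas[OF G] by simp
    show "emeasure lborel (ball (0::real^'n) 1) < \<infinity>"
      using emeasure_bounded_finite[of "ball (0::real^'n) 1"] by (simp add: less_top)
    show "AE x in lborel. x \<in> ball 0 1 \<longrightarrow> norm (?F x) \<le> B"
      by (intro AE_I2 impI) (simp add: B)
    show "AE x in lborel. x \<notin> ball 0 1 \<longrightarrow> ?F x = 0"
      by (intro AE_I2 impI) simp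
  qed simp
  have "(?F has_integral integral\<^sup>L lborel ?F) UNIV" by (rule has_integral_integral_lborel[OF int])
  moreover have "?F = (\<lambda>x. if x \<in> ball 0 1 then G x else 0)" by (auto simp: indicator_def)
  ultimately have "((\<lambda>x. if x \<in> ball 0 1 then G x else 0) has_integral integral\<^sup>L lborel ?F) UNIV"
    by simp
  then have hi: "(G has_integral integral\<^sup>L lborel ?F) (ball 0 1)"
    by (rule has_integral_restrict_UNIV[THEN iffD1])
  show "G integrable_on ball 0 1" using hi by (rule has_integral_integrable)
  show "integral (ball 0 1) G = integral\<^sup>L lborel ?F" using hi by (rule integral_unique)
qed

definition sperm :: "('n::finite \<Rightarrow> 'n) \<Rightarrow> ('n \<Rightarrow> real) \<Rightarrow> real^'n \<Rightarrow> real^'n" where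
  "sperm p s x = (\<chi> i. s i * x $ p i)"

lemma sperm_norm:
  assumes p: "bij p" and s: "\<And>i. s i = 1 \<or> s i = -1"
  shows "norm (sperm p s x) = norm x"
proof -
  have si: "s i * y * (s i * y) = y * y" for i y
  proof -
    have "s i * s i = 1" using s[of i] by auto
    then show ?thesis by (metis mult.assoc mult.commute mult_1)
  qed
  have "sperm p s x \<bullet> sperm p s x = (\<Sum>i\<in>UNIV. x $ p i * x $ p i)"
    unfolding sperm_def inner_vec_def vec_lambda_beta
    by (intro sum.cong refl) (simp add: si)
  also have "\<dots> = (\<Sum>i\<in>UNIV. x $ i * x $ i)"
    using sum.reindex_bij_betw[of p UNIV UNIV "\<lambda>i. x $ i * x $ i"] p by (simp add: bij_def)
  also have "\<dots> = x \<bullet> x" by (simp add: inner_vec_def)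
  finally show ?thesis by (simp add: norm_eq_sqrt_inner)
qed

lemma sperm_scaleR: "sperm p s (c *\<^sub>R x) = c *\<^sub>R sperm p s x"
  by (simp add: sperm_def vec_eq_iff)

lemma sphere_avg_sperm:
  fixes h :: "real^'n \<Rightarrow> real"
  assumes h: "continuous_on UNIV h" and p: "bij p" and s: "\<And>i. s i = 1 \<or> s i = -1"
  shows "sphere_avg (\<lambda>x. h (sperm p s x)) = sphere_avg h"
proof -
  define G where "G x = h (x /\<^sub>R norm x)" for x :: "real^'n"
  let ?T = "sperm p s"
  have Tm: "?T \<in> borel_measurable borel"
    unfolding sperm_def by (rule signed_perm_measurable)
  have hm: "h \<in> borel_measurable borel" by (rule borel_measurable_continuous_onI[OF h])
  have Gm: "G \<in> borel_measurable borel" unfolding G_def using hm by measurable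
  have "bounded (h ` cball (0::real^'n) 1)"
    by (intro compact_imp_bounded compact_continuous_image continuous_on_subset[OF h]) auto
  then obtain B where B0: "\<forall>z\<in>h ` cball (0::real^'n) 1. norm z \<le> B" by (auto simp: bounded_iff)
  have B: "\<bar>h y\<bar> \<le> B" if "y \<in> cball (0::real^'n) 1" for y using B0 that by auto
  have nrm: "norm (x /\<^sub>R norm x) \<le> 1" for x :: "real^'n"
    by (cases "x = 0") auto
  have GB: "\<bar>G x\<bar> \<le> B" for x unfolding G_def using B nrm by auto
  have GTm: "(\<lambda>x. G (?T x)) \<in> borel_measurable borel" using Gm Tm by measurable
  have eq1: "(\<lambda>x. h (?T (x /\<^sub>R norm x))) = (\<lambda>x. G (?T x))"
    by (auto simp: G_def sperm_scaleR sperm_norm[OF p s])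
  have "integral (ball 0 1) (\<lambda>x. G (?T x)) = integral\<^sup>L lborel (\<lambda>x. indicator (ball 0 1) x * G (?T x))"
    by (rule ball_integral_lborel(2)[OF GTm GB])
  also have "\<dots> = integral\<^sup>L lborel (\<lambda>x. indicator (ball 0 1) (?T x) * G (?T x))"
    by (simp add: indicator_def sperm_norm[OF p s])
  also have "\<dots> = integral\<^sup>L (distr lborel borel ?T) (\<lambda>x. indicator (ball 0 1) x * G x)"
    by (rule integral_distr[symmetric]) (use Tm ind_ball_meas[OF Gm] in auto)
  also have "distr lborel borel ?T = lborel"
    unfolding sperm_def[abs_def] by (rule signed_perm_distr[OF p s])
  also have "integral\<^sup>L lborel (\<lambda>x. indicator (ball 0 1) x * G x) = integral (ball 0 1) G"
    by (rule ball_integral_lborel(2)[OF Gm GB, symmetric])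
  finally show ?thesis unfolding sphere_avg_def eq1 G_def by simp
qed

definition mono :: "('n::finite \<Rightarrow> nat) \<Rightarrow> real^'n \<Rightarrow> real" where
  "mono a x = (\<Prod>i\<in>UNIV. (x $ i) ^ a i)"

lemma mono_cont: "continuous_on UNIV (mono a)"
  unfolding mono_def by (intro continuous_intros)

lemma ball_pos: "measure lebesgue (ball (0::real^'n::finite) 1) > 0"
  using content_ball_pos[of 1 "0::real^'n"] by simp

lemma sph_int:
  fixes h :: "real^'n::finite \<Rightarrow> real"
  assumes h: "continuous_on UNIV h"
  shows "(\<lambda>x. h (x /\<^sub>R norm x)) integrable_on ball 0 1"
proof -
  define G where "G x = h (x /\<^sub>R norm x)" for x :: "real^'n"
  have hm: "h \<in> borel_measurable borel" by (rule borel_measurable_continuous_onI[OF h])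
  have Gm: "G \<in> borel_measurable borel" unfolding G_def using hm by measurable
  have "bounded (h ` cball (0::real^'n) 1)"
    by (intro compact_imp_bounded compact_continuous_image continuous_on_subset[OF h]) auto
  then obtain B where B0: "\<forall>z\<in>h ` cball (0::real^'n) 1. norm z \<le> B" by (auto simp: bounded_iff)
  have B: "\<bar>h y\<bar> \<le> B" if "y \<in> cball (0::real^'n) 1" for y using B0 that by auto
  have nrm: "norm (x /\<^sub>R norm x) \<le> 1" for x :: "real^'n"
    by (cases "x = 0") auto
  have GB: "\<bar>G x\<bar> \<le> B" for x unfolding G_def using B nrm by auto
  show ?thesis using ball_integral_lborel(1)[OF Gm GB] unfolding G_def .
qed

lemma sphere_avg_sum:
  fixes h :: "'a \<Rightarrow> real^'n::finite \<Rightarrow> real"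
  assumes "finite F" and "\<And>a. a \<in> F \<Longrightarrow> continuous_on UNIV (h a)"
  shows "sphere_avg (\<lambda>x. \<Sum>a\<in>F. c a * h a x) = (\<Sum>a\<in>F. c a * sphere_avg (h a))"
proof -
  have "integral (ball 0 1) (\<lambda>x. \<Sum>a\<in>F. c a * h a (x /\<^sub>R norm x))
      = (\<Sum>a\<in>F. integral (ball 0 1) (\<lambda>x. c a * h a (x /\<^sub>R norm x)))"
    by (rule integral_sum) (use assms in \<open>auto intro!: integrable_on_mult_right[OF sph_int]\<close>)
  also have "\<dots> = (\<Sum>a\<in>F. c a * integral (ball 0 1) (\<lambda>x. h a (x /\<^sub>R norm x)))"
    by simp
  finally show ?thesis unfolding sphere_avg_def by (simp add: sum_divide_distrib)
qed

lemma sphere_avg_const: "sphere_avg (\<lambda>x::real^'n::finite. 1) = 1"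
proof -
  have "integral (ball (0::real^'n) 1) (\<lambda>x. 1) = measure lebesgue (ball (0::real^'n) 1)"
    by (rule lmeasure_integral[symmetric]) simp
  then show ?thesis using ball_pos[where 'n='n] unfolding sphere_avg_def by auto
qed

lemma sphere_avg_sq_sum: "(\<Sum>i\<in>UNIV. sphere_avg (\<lambda>x::real^'n::finite. (x $ i)^2)) = 1"
proof -
  have "(\<Sum>i\<in>UNIV. sphere_avg (\<lambda>x::real^'n::finite. (x $ i)^2))
     = (\<Sum>i\<in>UNIV. 1 * sphere_avg (\<lambda>x::real^'n::finite. (x $ i)^2))" by simp
  also have "\<dots> = sphere_avg (\<lambda>x::real^'n. \<Sum>i\<in>UNIV. 1 * (x $ i)^2)"
    by (rule sphere_avg_sum[symmetric]) (auto intro!: continuous_intros)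
  also have "\<dots> = 1"
  proof -
    have "integral (ball 0 1) (\<lambda>x::real^'n. \<Sum>i\<in>UNIV. 1 * ((x /\<^sub>R norm x) $ i)^2)
       = integral (ball 0 1) (\<lambda>x::real^'n. 1)"
    proof (rule integral_spike[of "{0}"])
      fix x :: "real^'n" assume "x \<in> ball 0 1 - {0}"
      then have "x \<noteq> 0" by auto
      have "(\<Sum>i\<in>UNIV. 1 * ((x /\<^sub>R norm x) $ i)^2) = (x /\<^sub>R norm x) \<bullet> (x /\<^sub>R norm x)"
        by (simp add: inner_vec_def power2_eq_square)
      also have "\<dots> = 1" using \<open>x \<noteq> 0\<close> by (simp add: dot_square_norm)
      finally show "1 = (\<Sum>i\<in>UNIV. 1 * ((x /\<^sub>R norm x) $ i)^2)" by simp
    qed simp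
    then show ?thesis using sphere_avg_const[where 'n='n] unfolding sphere_avg_def by auto
  qed
  finally show ?thesis .
qed

lemma sphere_avg_sq_swap:
  fixes i j :: "'n::finite"
  shows "sphere_avg (\<lambda>x::real^'n. (x $ i)^2) = sphere_avg (\<lambda>x::real^'n. (x $ j)^2)"
proof -
  define p where "p k = (if k = i then j else if k = j then i else k)" for k
  have "p \<circ> p = id" by (auto simp: p_def fun_eq_iff)
  then have bp: "bij p" by (metis o_bij)
  have "sphere_avg (\<lambda>x::real^'n. ((sperm p (\<lambda>_. 1) x) $ i)^2) = sphere_avg (\<lambda>x::real^'n. (x $ i)^2)"
    by (rule sphere_avg_sperm[OF _ bp]) (auto intro!: continuous_intros)
  moreover have "(\<lambda>x::real^'n. ((sperm p (\<lambda>_. 1) x) $ i)^2) = (\<lambda>x. (x $ j)^2)"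
    by (simp add: sperm_def p_def)
  ultimately show ?thesis by simp
qed

lemma sphere_avg_sq:
  fixes i :: "'n::finite"
  shows "sphere_avg (\<lambda>x::real^'n. (x $ i)^2) = 1 / real CARD('n)"
proof -
  have "(\<Sum>k\<in>UNIV. sphere_avg (\<lambda>x::real^'n. (x $ k)^2)) = (\<Sum>k\<in>(UNIV::'n set). sphere_avg (\<lambda>x::real^'n. (x $ i)^2))"
    by (rule sum.cong[OF refl]) (rule sphere_avg_sq_swap)
  then have "(\<Sum>k\<in>UNIV. sphere_avg (\<lambda>x::real^'n. (x $ k)^2)) = real CARD('n) * sphere_avg (\<lambda>x::real^'n. (x $ i)^2)"
    by simp
  then show ?thesis using sphere_avg_sq_sum[where 'n='n] by (simp add: field_simps)
qed

lemma sphere_avg_odd: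
  fixes a :: "'n::finite \<Rightarrow> nat"
  assumes "odd (a i)"
  shows "sphere_avg (mono a) = 0"
proof -
  define s where "s k = (if k = i then -1 else 1::real)" for k
  have s: "s k = 1 \<or> s k = -1" for k by (simp add: s_def)
  have "sphere_avg (\<lambda>x. mono a (sperm id s x)) = sphere_avg (mono a)"
    by (rule sphere_avg_sperm[OF mono_cont bij_id s])
  moreover have "mono a (sperm id s x) = - mono a x" for x
  proof -
    have "mono a (sperm id s x) = (\<Prod>k\<in>UNIV. s k ^ a k) * mono a x"
      by (simp add: mono_def sperm_def power_mult_distrib prod.distrib)
    also have "(\<Prod>k\<in>UNIV. s k ^ a k) = (\<Prod>k\<in>UNIV. if k = i then (-1) ^ a i else 1)"
      by (intro prod.cong) (auto simp: s_def)
    also have "\<dots> = -1" using assms by simp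
    finally show ?thesis by (simp add: id_def)
  qed
  ultimately have "sphere_avg (\<lambda>x. - mono a x) = sphere_avg (mono a)" by simp
  then show ?thesis unfolding sphere_avg_def by simp
qed

definition smom :: "('n::finite \<Rightarrow> nat) \<Rightarrow> real" where
  "smom a = (if a = (\<lambda>_. 0) then 1 else if (\<exists>i. a = (\<lambda>j. if j = i then 2 else 0)) then 1 / real CARD('n) else 0)"

lemma le_sum_two:
  fixes a :: "'n::finite \<Rightarrow> nat"
  assumes "i \<noteq> j"
  shows "a i + a j \<le> sum a UNIV"
proof -
  have "sum a UNIV = a i + sum a (UNIV - {i})" by (simp add: sum.remove)
  moreover have "a j \<le> sum a (UNIV - {i})" using assms by (intro member_le_sum) auto
  ultimately show ?thesis by simp
qed

lemma even_small:
  fixes a :: "'n::finite \<Rightarrow> nat"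
  assumes ev: "\<And>i. even (a i)" and s: "sum a UNIV \<le> 3"
  shows "a = (\<lambda>_. 0) \<or> (\<exists>i. a = (\<lambda>j. if j = i then 2 else 0))"
proof (cases "a = (\<lambda>_. 0)")
  case False
  then obtain i where i: "a i \<noteq> 0" by auto
  have ai: "a i \<le> 3" using member_le_sum[of i UNIV a] s by simp
  have ai2: "a i = 2" using ev[of i] i ai by presburger
  have "a j = 0" if "j \<noteq> i" for j
  proof -
    have "a i + a j \<le> 3" using le_sum_two[of i j a] that s by simp
    then show ?thesis using ev[of j] ai2 by presburger
  qed
  then have "a = (\<lambda>j. if j = i then 2 else 0)" using ai2 by auto
  then show ?thesis by blast
qed simp

lemma mono_zero: "mono (\<lambda>_. 0) = (\<lambda>x. 1)"
  by (simp add: mono_def fun_eq_iff)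

lemma mono_sq: "mono (\<lambda>j. if j = i then 2 else 0) = (\<lambda>x::real^'n::finite. (x $ i)^2)"
proof
  fix x :: "real^'n"
  have "mono (\<lambda>j. if j = i then 2 else 0) x = (\<Prod>j\<in>UNIV. if j = i then (x $ i)^2 else 1)"
    unfolding mono_def by (intro prod.cong) auto
  then show "mono (\<lambda>j. if j = i then 2 else 0) x = (x $ i)^2" by simp
qed

lemma sphere_mono:
  fixes a :: "'n::finite \<Rightarrow> nat"
  assumes s: "sum a UNIV \<le> 3"
  shows "sphere_avg (mono a) = smom a"
proof (cases "\<exists>i. odd (a i)")
  case True
  then obtain i where i: "odd (a i)" by blast
  have "a \<noteq> (\<lambda>_. 0)" using i by auto
  moreover have "\<not> (\<exists>k. a = (\<lambda>j. if j = k then 2 else 0))"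
  proof
    assume "\<exists>k. a = (\<lambda>j. if j = k then 2 else 0)"
    then obtain k where "a = (\<lambda>j. if j = k then 2 else 0)" by blast
    then show False using i by (auto split: if_splits)
  qed
  ultimately show ?thesis using sphere_avg_odd[of a i, OF i] unfolding smom_def by simp
next
  case False
  then have "a = (\<lambda>_. 0) \<or> (\<exists>i. a = (\<lambda>j. if j = i then 2 else 0))"
    using even_small[OF _ s] by blast
  then show ?thesis
  proof
    assume "a = (\<lambda>_. 0)"
    then show ?thesis by (simp add: smom_def mono_zero sphere_avg_const)
  next
    assume "\<exists>i. a = (\<lambda>j. if j = i then 2 else 0)"
    then obtain i where a: "a = (\<lambda>j. if j = i then 2 else 0)" by blast
    have "a \<noteq> (\<lambda>_. 0)" using a by (metis zero_neq_numeral)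
    then have "smom a = 1 / real CARD('n)" using a unfolding smom_def by auto
    then show ?thesis using a by (simp add: mono_sq sphere_avg_sq)
  qed
qed

lemma prod_opt: "(\<Prod>i\<in>(UNIV::'a::finite option set). f i) = f None * (\<Prod>k\<in>UNIV. f (Some k))"
  by (simp add: UNIV_option_conv prod.reindex)

lemma sum_opt: "(\<Sum>i\<in>(UNIV::'a::finite option set). f i) = f None + (\<Sum>k\<in>UNIV. f (Some k))"
  by (simp add: UNIV_option_conv sum.reindex)

lemma sum_double: "(\<Sum>j<2*(n::nat). f j) = (\<Sum>j<n. f j) + (\<Sum>j<n. f (j + n))"
proof -
  have "(\<Sum>j<2*n. f j) = sum f {0..<n} + sum f {n..<n+n}"
    by (simp add: sum.atLeastLessThan_concat lessThan_atLeast0 mult_2)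
  also have "sum f {n..<n+n} = (\<Sum>j=0..<n. f (j + n))"
    using sum.shift_bounds_nat_ivl[of f 0 n n] by simp
  finally show ?thesis by (simp add: lessThan_atLeast0)
qed

definition lift :: "real \<Rightarrow> real \<Rightarrow> real^'d::finite \<Rightarrow> real^'d option" where
  "lift al de v = (\<chi> i. case i of Some k \<Rightarrow> al * v $ k | None \<Rightarrow> de)"

lemma mono_lift:
  "mono a (lift al de v) = de ^ a None * al ^ (\<Sum>k\<in>UNIV. a (Some k)) * mono (\<lambda>k. a (Some k)) v"
proof -
  have "mono a (lift al de v) = de ^ a None * (\<Prod>k\<in>UNIV. (al * v $ k) ^ a (Some k))"
    unfolding mono_def prod_opt by (simp add: lift_def)
  also have "(\<Prod>k\<in>UNIV. (al * v $ k) ^ a (Some k)) = (\<Prod>k\<in>UNIV. al ^ a (Some k)) * (\<Prod>k\<in>UNIV. (v $ k) ^ a (Some k))"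
    by (simp only: power_mult_distrib prod.distrib)
  also have "(\<Prod>k\<in>UNIV. al ^ a (Some k)) = al ^ (\<Sum>k\<in>UNIV. a (Some k))"
    by (rule power_sum[symmetric])
  finally show ?thesis by (simp add: mono_def mult.assoc)
qed

lemma mono_neg: "mono a (- w) = (-1) ^ (sum a UNIV) * mono a w"
proof -
  have "mono a (- w) = (\<Prod>i\<in>UNIV. (-1) ^ a i * (w $ i) ^ a i)"
    unfolding mono_def by (intro prod.cong refl) (simp only: vector_uminus_component, rule power_minus)
  also have "\<dots> = (-1) ^ (sum a UNIV) * mono a w"
    by (simp only: prod.distrib mono_def power_sum)
  finally show ?thesis .
qed

lemma norm_lift:
  fixes v :: "real^'d::finite"
  assumes "norm v = 1" "al^2 + de^2 = 1"
  shows "norm (lift al de v) = 1"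
proof -
  have "lift al de v \<bullet> lift al de v = de * de + (\<Sum>k\<in>UNIV. (al * v $ k) * (al * v $ k))"
    unfolding inner_vec_def sum_opt by (simp add: lift_def)
  also have "(\<Sum>k\<in>UNIV. (al * v $ k) * (al * v $ k)) = al^2 * (\<Sum>k\<in>UNIV. v $ k * v $ k)"
    by (simp add: sum_distrib_left power2_eq_square mult_ac)
  also have "(\<Sum>k\<in>UNIV. v $ k * v $ k) = v \<bullet> v" by (simp add: inner_vec_def)
  also have "v \<bullet> v = 1" using assms(1) by (simp add: dot_square_norm)
  finally have "lift al de v \<bullet> lift al de v = 1" using assms(2) by (simp add: power2_eq_square)
  then show ?thesis by (simp add: norm_eq_sqrt_inner)
qed

lemma opt_fun_eq:
  fixes a g :: "'d option \<Rightarrow> 'b"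
  assumes "a None = g None" "\<And>k. a (Some k) = g (Some k)"
  shows "a = g"
proof
  fix x show "a x = g x" using assms by (cases x) auto
qed

lemma sum_e2: "sum (\<lambda>j. if j = i then (2::nat) else 0) (UNIV::'n::finite set) = 2"
  by simp

lemma rel:
  fixes a :: "'d::finite option \<Rightarrow> nat"
  assumes al: "al^2 = real CARD('d) / (real CARD('d) + 1)"
      and de: "de^2 = 1 / (real CARD('d) + 1)"
      and s: "sum a UNIV \<le> 2" and ev: "even (sum a UNIV)"
  shows "de ^ a None * al ^ (\<Sum>k\<in>UNIV. a (Some k)) * smom (\<lambda>k. a (Some k)) = smom a"
proof -
  define b where "b = (\<lambda>k. a (Some k))"
  have sa: "sum a UNIV = a None + sum b UNIV" unfolding b_def by (rule sum_opt)
  have cardo: "real CARD('d option) = real CARD('d) + 1" by (simp add: card_UNIV_option)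
  have Dpos: "real CARD('d) > 0" by simp
  have main: "de ^ a None * al ^ (sum b UNIV) * smom b = smom a"
  proof (cases "b = (\<lambda>_. 0)")
    case True
    then have m0: "sum b UNIV = 0" by simp
    have bs: "smom b = 1" using True by (simp add: smom_def)
    have "a None \<le> 2" using s sa m0 by simp
    then consider "a None = 0" | "a None = 1" | "a None = 2" by linarith
    then show ?thesis
    proof cases
      case 1
      have "a = (\<lambda>_. 0)" by (rule opt_fun_eq) (use 1 True b_def in \<open>auto dest: fun_cong\<close>)
      then show ?thesis using bs m0 1 by (simp add: smom_def)
    next
      case 2
      have "odd (sum a UNIV)" using sa m0 2 by simp
      then show ?thesis using ev by simp
    next
      case 3
      have a: "a = (\<lambda>j. if j = None then 2 else 0)"
        by (rule opt_fun_eq) (use 3 True b_def in \<open>auto dest: fun_cong\<close>)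
      have "a \<noteq> (\<lambda>_. 0)" using 3 by auto
      then have "smom a = 1 / real CARD('d option)" using a unfolding smom_def by auto
      then show ?thesis using bs m0 3 de cardo by simp
    qed
  next
    case False
    note bnz = False
    show ?thesis
    proof (cases "\<exists>k. b = (\<lambda>j. if j = k then 2 else 0)")
      case True
      then obtain k where bk: "b = (\<lambda>j. if j = k then 2 else 0)" by blast
      have m2: "sum b UNIV = 2" using bk by simp
      have aN: "a None = 0" using s sa m2 by simp
      have a: "a = (\<lambda>j. if j = Some k then 2 else 0)"
        by (rule opt_fun_eq) (use aN fun_cong[OF bk[unfolded b_def]] in auto)
      have "a \<noteq> (\<lambda>_. 0)" using a by (metis zero_neq_numeral)
      then have sma: "smom a = 1 / real CARD('d option)" using a unfolding smom_def by auto
      have "b \<noteq> (\<lambda>_. 0)" using bk by (metis zero_neq_numeral)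
      then have smb: "smom b = 1 / real CARD('d)" using bk unfolding smom_def by auto
      have "de ^ a None * al ^ sum b UNIV * smom b = al^2 * (1 / real CARD('d))"
        by (simp add: aN m2 smb)
      also have "\<dots> = 1 / (real CARD('d) + 1)" using al Dpos by (simp add: field_simps)
      also have "\<dots> = smom a" using sma cardo by simp
      finally show ?thesis .
    next
      case False
      have smb: "smom b = 0" using False bnz unfolding smom_def by auto
      have "a \<noteq> (\<lambda>_. 0)" using bnz unfolding b_def by auto
      moreover have "\<not> (\<exists>i. a = (\<lambda>j. if j = i then 2 else 0))"
      proof
        assume "\<exists>i. a = (\<lambda>j. if j = i then 2 else 0)"
        then obtain i where ai: "a = (\<lambda>j. if j = i then 2 else 0)" by blast
        show False
        proof (cases i)
          case None
          then have "b = (\<lambda>_. 0)" using ai b_def by auto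
          then show False using bnz by simp
        next
          case (Some k)
          then have "b = (\<lambda>j. if j = k then 2 else 0)" using ai b_def by auto
          then show False using False by blast
        qed
      qed
      ultimately have "smom a = 0" unfolding smom_def by auto
      then show ?thesis using smb by simp
    qed
  qed
  then show ?thesis by (simp add: b_def)
qed

lemma design_mono:
  fixes A :: "nat \<Rightarrow> real^'d::finite" and n :: nat and a :: "'d option \<Rightarrow> nat"
  assumes H: "\<And>b. sum b UNIV \<le> 2 \<Longrightarrow> (\<Sum>j<n. mono b (A j)) / real n = smom b"
      and n: "n > 0" and s: "sum a UNIV \<le> 3"
      and al: "al^2 = real CARD('d) / (real CARD('d) + 1)"
      and de: "de^2 = 1 / (real CARD('d) + 1)"
  shows "(\<Sum>j<2*n. mono a (if j < n then lift al de (A j) else - lift al de (A (j - n)))) / real (2*n) = smom a"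
proof -
  define b where "b = (\<lambda>k. a (Some k))"
  define S where "S = sum a UNIV"
  have sa: "S = a None + sum b UNIV" unfolding b_def S_def by (rule sum_opt)
  have "(\<Sum>j<2*n. mono a (if j < n then lift al de (A j) else - lift al de (A (j - n))))
      = (\<Sum>j<n. mono a (lift al de (A j))) + (\<Sum>j<n. mono a (- lift al de (A j)))"
    by (simp add: sum_double)
  also have "\<dots> = (1 + (-1)^S) * (\<Sum>j<n. mono a (lift al de (A j)))"
    by (simp add: mono_neg S_def sum_distrib_left sum.distrib algebra_simps)
  also have "(\<Sum>j<n. mono a (lift al de (A j))) = de ^ a None * al ^ sum b UNIV * (\<Sum>j<n. mono b (A j))"
    by (simp add: mono_lift b_def sum_distrib_left)
  finally have eq: "(\<Sum>j<2*n. mono a (if j < n then lift al de (A j) else - lift al de (A (j - n))))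
      = (1 + (-1)^S) * (de ^ a None * al ^ sum b UNIV * (\<Sum>j<n. mono b (A j)))" .
  show ?thesis
  proof (cases "even S")
    case False
    have "a \<noteq> (\<lambda>_. 0)" using False unfolding S_def by auto
    moreover have "\<not> (\<exists>i. a = (\<lambda>j. if j = i then 2 else 0))"
    proof
      assume "\<exists>i. a = (\<lambda>j. if j = i then 2 else 0)"
      then obtain i where "a = (\<lambda>j. if j = i then 2 else 0)" by blast
      then have "S = 2" unfolding S_def by simp
      then show False using False by simp
    qed
    ultimately have "smom a = 0" unfolding smom_def by auto
    then show ?thesis using eq False by simp
  next
    case True
    have S3: "S \<le> 3" using s S_def by simp
    have "S \<noteq> 3" using True by auto
    then have S2: "S \<le> 2" using S3 by linarith
    have "(\<Sum>j<n. mono b (A j)) = real n * smom b"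
      using H[of b] S2 sa n by (simp add: field_simps)
    then have "(\<Sum>j<2*n. mono a (if j < n then lift al de (A j) else - lift al de (A (j - n)))) / real (2*n)
        = de ^ a None * al ^ sum b UNIV * smom b"
      using eq True n by simp
    also have "\<dots> = smom a" unfolding b_def
      by (rule rel[OF al de]) (use S2 True in \<open>auto simp: S_def\<close>)
    finally show ?thesis .
  qed
qed

theorem mainTheorem4:
  fixes A :: "nat \<Rightarrow> real^'d" and n1 :: nat
  assumes "sph_design 2 n1 A"
  shows "sph_design 3 (2 * n1)
           (\<lambda>j. \<chi> i :: 'd option.
              (case i of
                 Some k \<Rightarrow> (if j < n1 then sqrt (real CARD('d) / (real CARD('d) + 1)) * (A j $ k)
                            else - sqrt (real CARD('d) / (real CARD('d) + 1)) * (A (j - n1) $ k))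
               | None \<Rightarrow> (if j < n1 then sqrt (1 / (real CARD('d) + 1))
                          else - sqrt (1 / (real CARD('d) + 1)))))"
proof -
  define al where "al = sqrt (real CARD('d) / (real CARD('d) + 1))"
  define de where "de = sqrt (1 / (real CARD('d) + 1))"
  have al2: "al^2 = real CARD('d) / (real CARD('d) + 1)" unfolding al_def by simp
  have de2: "de^2 = 1 / (real CARD('d) + 1)" unfolding de_def by simp
  have alde: "al^2 + de^2 = 1" unfolding al2 de2 by (simp add: field_simps)
  define X where "X j = (if j < n1 then lift al de (A j) else - lift al de (A (j - n1)))" for j
  have Xeq: "(\<lambda>j. \<chi> i :: 'd option.
              (case i of
                 Some k \<Rightarrow> (if j < n1 then sqrt (real CARD('d) / (real CARD('d) + 1)) * (A j $ k)
                            else - sqrt (real CARD('d) / (real CARD('d) + 1)) * (A (j - n1) $ k))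
               | None \<Rightarrow> (if j < n1 then sqrt (1 / (real CARD('d) + 1))
                          else - sqrt (1 / (real CARD('d) + 1))))) = X"
  proof
    fix j
    show "(\<chi> i :: 'd option.
              (case i of
                 Some k \<Rightarrow> (if j < n1 then sqrt (real CARD('d) / (real CARD('d) + 1)) * (A j $ k)
                            else - sqrt (real CARD('d) / (real CARD('d) + 1)) * (A (j - n1) $ k))
               | None \<Rightarrow> (if j < n1 then sqrt (1 / (real CARD('d) + 1))
                          else - sqrt (1 / (real CARD('d) + 1))))) = X j"
      unfolding vec_eq_iff
    proof
      fix i :: "'d option"
      show "(\<chi> i :: 'd option.
              (case i of
                 Some k \<Rightarrow> (if j < n1 then sqrt (real CARD('d) / (real CARD('d) + 1)) * (A j $ k)
                            else - sqrt (real CARD('d) / (real CARD('d) + 1)) * (A (j - n1) $ k))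
               | None \<Rightarrow> (if j < n1 then sqrt (1 / (real CARD('d) + 1))
                          else - sqrt (1 / (real CARD('d) + 1))))) $ i = X j $ i"
        by (cases i) (simp_all add: X_def lift_def al_def de_def)
    qed
  qed
  from assms have A1: "\<And>j. j < n1 \<Longrightarrow> norm (A j) = 1"
    and A2: "\<And>f. poly_fun_deg 2 f \<Longrightarrow> sphere_avg f = (\<Sum>j<n1. f (A j)) / real n1"
    unfolding sph_design_def by auto
  have pm: "poly_fun_deg t (mono b)" if "sum b UNIV \<le> t" for t and b :: "'d \<Rightarrow> nat"
    unfolding poly_fun_deg_def
    by (rule exI[of _ "{b}"], rule exI[of _ "\<lambda>_. 1"]) (use that in \<open>auto simp: mono_def fun_eq_iff\<close>)
  have H: "(\<Sum>j<n1. mono b (A j)) / real n1 = smom b" if "sum b UNIV \<le> 2" for b :: "'d \<Rightarrow> nat"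
    using A2[OF pm[OF that]] sphere_mono[of b] that by simp
  have n1: "n1 > 0"
  proof (rule ccontr)
    assume "\<not> n1 > 0"
    then have "n1 = 0" by simp
    then show False using H[of "\<lambda>_. 0"] by (simp add: smom_def)
  qed
  have norms: "\<forall>j<2*n1. norm (X j) = 1"
  proof (intro allI impI)
    fix j assume j: "j < 2 * n1"
    show "norm (X j) = 1"
    proof (cases "j < n1")
      case True then show ?thesis using norm_lift[OF A1 alde] by (simp add: X_def)
    next
      case False
      then have "j - n1 < n1" using j by simp
      then show ?thesis using norm_lift[OF A1 alde] False by (simp add: X_def)
    qed
  qed
  have dm: "(\<Sum>j<2*n1. mono a (X j)) / real (2*n1) = smom a" if "sum a UNIV \<le> 3" for a
    unfolding X_def by (rule design_mono[OF H n1 that al2 de2])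
  have polys: "sphere_avg f = (\<Sum>j<2*n1. f (X j)) / real (2*n1)" if f: "poly_fun_deg 3 f" for f
  proof -
    obtain F c where F: "finite F" "\<forall>a\<in>F. (\<Sum>i\<in>UNIV. a i) \<le> 3"
      and fe: "f = (\<lambda>x. \<Sum>a\<in>F. c a * mono a x)"
      using f unfolding poly_fun_deg_def mono_def by blast
    have "sphere_avg f = (\<Sum>a\<in>F. c a * sphere_avg (mono a))"
      unfolding fe by (rule sphere_avg_sum[OF F(1) mono_cont])
    also have "\<dots> = (\<Sum>a\<in>F. c a * smom a)"
      using F(2) by (intro sum.cong refl) (simp add: sphere_mono)
    also have "\<dots> = (\<Sum>a\<in>F. c a * ((\<Sum>j<2*n1. mono a (X j)) / real (2*n1)))"
    proof (intro sum.cong refl)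
      fix a assume "a \<in> F"
      then have "sum a UNIV \<le> 3" using F(2) by auto
      then show "c a * smom a = c a * ((\<Sum>j<2*n1. mono a (X j)) / real (2*n1))"
        by (simp only: dm)
    qed
    also have "\<dots> = (\<Sum>j<2*n1. f (X j)) / real (2*n1)"
      unfolding fe by (simp add: sum_divide_distrib sum_distrib_left sum.swap[of _ F] mult_ac)
    finally show ?thesis .
  qed
  show ?thesis unfolding Xeq sph_design_def using norms polys by blast
qed

end
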